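(* Let $P$ be an increasing tableau of normal shape with $C$ columns, and for $1\le i\le j$ let $P_{i,j}=P_i\triangleleft(P_{i+1}\triangleleft(\cdots\triangleleft P_j))$. Suppose an anti-rectification of $P$ (with any choices of placements of $\bullet$'s) produces an anti-normal increasing tableau $P^{\searrow}$ whose rightmost column is column $C$. Then the set of entries in column $1$ of $P^{\searrow}$ equals $P_{1,C}$.
   Context: Tableaux are drawn in English convention; $T_j$ is the set of (integer) entries of column $j$. For finite $S,T\subseteq\mathbb{Z}_{>0}$, $T\triangleleft S$ is obtained by going through $S$ from largest to smallest, each $s$ picking the largest not-yet-picked element of $T$ less than $s$ (if any), and taking the set of picked elements. A skew diagram $\lambda/\mu$ is the set difference of two nested Young diagrams; it is normal if $\mu=\emptyset$ and anti-normal if it is right- and bottom-justified (i.e. $\lambda$ is a rectangle). An increasing skew tableau is a filling of a skew diagram with positive integers strictly increasing along rows and columns. A dotted skew tableau is a filling of a skew diagram with positive integers and the symbol $\bullet$; for $m\ge0$, $\mathrm{sInc}_{m<\bullet}$ is the set of dotted skew tableaux whose rows and columns are strictly increasing for the order $1<\cdots<m<\bullet<m+1<\cdots$. For $m\ge1$, the reverse K-jeu-de-taquin move $\mathrm{sInc}_{m<\bullet}\to\mathrm{sInc}_{m-1<\bullet}$ simultaneously replaces every $\bullet$ that is edge-adjacent to an $m$ by $m$ and every $m$ that is edge-adjacent to a $\bullet$ by $\bullet$ (shape preserved). One anti-rectification step on an increasing skew tableau with entries at most $m$: add some new cells filled with $\bullet$ so that the result is a dotted skew tableau in $\mathrm{sInc}_{m<\bullet}$,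 apply the reverse K-jeu-de-taquin moves for $m,m-1,\dots,1$ to get an element of $\mathrm{sInc}_{0<\bullet}$, then delete all $\bullet$ cells. Anti-rectification repeats such steps (with arbitrary choices) until the shape is anti-normal. *)

theory Defs
  imports Main
begin

text \<open>Cells are pairs (row, column) of positive naturals (English convention,
rows numbered top to bottom, columns left to right, starting at 1).\<close>

type_synonym cell = "nat \<times> nat"

definition young :: "cell set \<Rightarrow> bool" where
  "young D \<longleftrightarrow> finite D \<and> (\<forall>(i,j)\<in>D. 1 \<le> i \<and> 1 \<le> j) \<and>
     (\<forall>i j i' j'. (i,j) \<in> D \<longrightarrow> 1 \<le> i' \<longrightarrow> i' \<le> i \<longrightarrow> 1 \<le> j' \<longrightarrow> j' \<le> j \<longrightarrow> (i',j') \<in> D)"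

definition skew :: "cell set \<Rightarrow> bool" where
  "skew S \<longleftrightarrow> (\<exists>L M. young L \<and> young M \<and> M \<subseteq> L \<and> S = L - M)"

definition rect :: "nat \<Rightarrow> nat \<Rightarrow> cell set" where
  "rect a b = {1..a} \<times> {1..b}"

definition antinormal :: "cell set \<Rightarrow> bool" where
  "antinormal S \<longleftrightarrow> (\<exists>a b M. young M \<and> M \<subseteq> rect a b \<and> S = rect a b - M)"

definition inc_tab :: "(cell \<Rightarrow> nat option) \<Rightarrow> bool" where
  "inc_tab T \<longleftrightarrow> skew (dom T) \<and> (\<forall>c v. T c = Some v \<longrightarrow> 1 \<le> v) \<and>
     (\<forall>i j j' a b. T (i,j) = Some a \<longrightarrow> T (i,j') = Some b \<longrightarrow> j < j' \<longrightarrow> a < b) \<and>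
     (\<forall>i i' j a b. T (i,j) = Some a \<longrightarrow> T (i',j) = Some b \<longrightarrow> i < i' \<longrightarrow> a < b)"

datatype dentry = Num nat | Dot

text \<open>The order 1 < ... < m < Dot < m+1 < ...\<close>
fun dlt :: "nat \<Rightarrow> dentry \<Rightarrow> dentry \<Rightarrow> bool" where
  "dlt m (Num a) (Num b) = (a < b)"
| "dlt m (Num a) Dot = (a \<le> m)"
| "dlt m Dot (Num b) = (m < b)"
| "dlt m Dot Dot = False"

definition sInc :: "nat \<Rightarrow> (cell \<Rightarrow> dentry option) \<Rightarrow> bool" where
  "sInc m D \<longleftrightarrow> skew (dom D) \<and> (\<forall>c v. D c = Some (Num v) \<longrightarrow> 1 \<le> v) \<and>
     (\<forall>i j j' a b. D (i,j) = Some a \<longrightarrow> D (i,j') = Some b \<longrightarrow> j < j' \<longrightarrow> dlt m a b) \<and>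
     (\<forall>i i' j a b. D (i,j) = Some a \<longrightarrow> D (i',j) = Some b \<longrightarrow> i < i' \<longrightarrow> dlt m a b)"

definition adj :: "cell \<Rightarrow> cell \<Rightarrow> bool" where
  "adj c c' \<longleftrightarrow> (fst c = fst c' \<and> (snd c' = snd c + 1 \<or> snd c = snd c' + 1)) \<or>
                (snd c = snd c' \<and> (fst c' = fst c + 1 \<or> fst c = fst c' + 1))"

text \<open>Reverse K-jeu-de-taquin move sInc_{m<Dot} -> sInc_{m-1<Dot}.\<close>
definition kmove :: "nat \<Rightarrow> (cell \<Rightarrow> dentry option) \<Rightarrow> (cell \<Rightarrow> dentry option)" where
  "kmove m D = (\<lambda>c. case D c of
      None \<Rightarrow> None
    | Some Dot \<Rightarrow> (if \<exists>c'. adj c c' \<and> D c' = Some (Num m) then Some (Num m) else Some Dot)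
    | Some (Num k) \<Rightarrow> (if k = m \<and> (\<exists>c'. adj c c' \<and> D c' = Some Dot) then Some Dot else Some (Num k)))"

fun rev_moves :: "nat \<Rightarrow> (cell \<Rightarrow> dentry option) \<Rightarrow> (cell \<Rightarrow> dentry option)" where
  "rev_moves 0 D = D"
| "rev_moves (Suc k) D = rev_moves k (kmove (Suc k) D)"

definition undot :: "(cell \<Rightarrow> dentry option) \<Rightarrow> (cell \<Rightarrow> nat option)" where
  "undot D = (\<lambda>c. case D c of Some (Num k) \<Rightarrow> Some k | _ \<Rightarrow> None)"

definition add_dots :: "(cell \<Rightarrow> nat option) \<Rightarrow> cell set \<Rightarrow> (cell \<Rightarrow> dentry option)" where
  "add_dots T B = (\<lambda>c. if c \<in> B then Some Dot else map_option Num (T c))"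

definition antirect_step :: "(cell \<Rightarrow> nat option) \<Rightarrow> (cell \<Rightarrow> nat option) \<Rightarrow> bool" where
  "antirect_step T T' \<longleftrightarrow> inc_tab T \<and>
     (\<exists>m B. (\<forall>c v. T c = Some v \<longrightarrow> v \<le> m) \<and> B \<inter> dom T = {} \<and>
        sInc m (add_dots T B) \<and> T' = undot (rev_moves m (add_dots T B)))"

inductive antirect :: "(cell \<Rightarrow> nat option) \<Rightarrow> (cell \<Rightarrow> nat option) \<Rightarrow> bool" where
  stop: "antinormal (dom T) \<Longrightarrow> antirect T T"
| next_step: "\<not> antinormal (dom T) \<Longrightarrow> antirect_step T T'' \<Longrightarrow> antirect T'' T' \<Longrightarrow> antirect T T'"

definition col :: "(cell \<Rightarrow> nat option) \<Rightarrow> nat \<Rightarrow> nat set" where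
  "col T j = {v. \<exists>i. T (i,j) = Some v}"

fun tri_aux :: "nat set \<Rightarrow> nat list \<Rightarrow> nat set \<Rightarrow> nat set" where
  "tri_aux T [] A = A"
| "tri_aux T (s # ss) A =
     tri_aux T ss (let c = {t \<in> T. t < s \<and> t \<notin> A} in if c = {} then A else insert (Max c) A)"

definition tri :: "nat set \<Rightarrow> nat set \<Rightarrow> nat set" (infixr "\<triangleleft>" 65) where
  "T \<triangleleft> S = tri_aux T (rev (sorted_list_of_set S)) {}"

definition Pij :: "(cell \<Rightarrow> nat option) \<Rightarrow> nat \<Rightarrow> nat \<Rightarrow> nat set" where
  "Pij P i j = foldr (\<lambda>k acc. col P k \<triangleleft> acc) [i..<j] (col P j)"

end

theory Submission
  imports Defs
begin


lemma sorted_list_of_set_Max: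
  assumes "finite (A::nat set)" "A \<noteq> {}"
  shows "sorted_list_of_set A = sorted_list_of_set (A - {Max A}) @ [Max A]"
proof -
  have fin: "finite (A - {Max A})" using assms by auto
  have lt: "\<forall>x\<in>A - {Max A}. x < Max A" using assms by (metis DiffE Max_ge insertCI le_neq_implies_less)
  have "sorted_wrt (<) (sorted_list_of_set (A - {Max A}) @ [Max A])"
    unfolding sorted_wrt_append using lt fin by (simp add: sorted_list_of_set.strict_sorted_key_list_of_set)
  moreover have "set (sorted_list_of_set (A - {Max A}) @ [Max A]) = A"
    using fin Max_in[OF assms] by (simp add: insert_absorb)
  moreover have "length (sorted_list_of_set (A - {Max A}) @ [Max A]) = card A"
    using assms fin by (simp add: card_gt_0_iff Suc_pred)
  ultimately show ?thesis
    using sorted_list_of_set.sorted_key_list_of_set_unique[of A] assms by blast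
qed
lemma tri_aux_split: "tri_aux T ss A = A \<union> tri_aux (T - A) ss {}"
proof (induction ss arbitrary: A T)
  case Nil then show ?case by simp
next
  case (Cons s ss)
  define c where "c = {t \<in> T. t < s \<and> t \<notin> A}"
  have c2: "{t \<in> T - A. t < s \<and> t \<notin> {}} = c" by (auto simp: c_def)
  show ?case
  proof (cases "c = {}")
    case True
    have 1: "tri_aux T (s # ss) A = tri_aux T ss A"
      using True by (simp add: c_def[symmetric] Let_def)
    have 3: "tri_aux (T - A) (s # ss) {} = tri_aux (T - A) ss {}"
      by (simp only: tri_aux.simps(2), simp only: c2, simp only: Let_def, simp only: if_P[OF True])
    show ?thesis unfolding 1 3 by (rule Cons.IH)
  next
    case False
    have 1: "tri_aux T (s # ss) A = tri_aux T ss (insert (Max c) A)"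
      using False by (simp add: c_def[symmetric] Let_def)
    have 2: "tri_aux T ss (insert (Max c) A) = insert (Max c) A \<union> tri_aux (T - insert (Max c) A) ss {}" by (rule Cons.IH)
    have 3: "tri_aux (T - A) (s # ss) {} = tri_aux (T - A) ss {Max c}"
      by (simp only: tri_aux.simps(2), simp only: c2, simp only: Let_def, simp only: if_not_P[OF False])
    have 4: "tri_aux (T - A) ss {Max c} = {Max c} \<union> tri_aux (T - A - {Max c}) ss {}" by (rule Cons.IH)
    have 5: "T - insert (Max c) A = T - A - {Max c}" by auto
    show ?thesis unfolding 1 2 3 4 5 by auto
  qed
qed

lemma tri_empty[simp]: "T \<triangleleft> {} = {}"
  by (simp add: tri_def)

lemma tri_rec:
  assumes "finite S" "S \<noteq> {}"
  shows "T \<triangleleft> S = (if {t \<in> T. t < Max S} = {} then T \<triangleleft> (S - {Max S})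
          else insert (Max {t \<in> T. t < Max S}) ((T - {Max {t \<in> T. t < Max S}}) \<triangleleft> (S - {Max S})))"
proof -
  define c where "c = {t \<in> T. t < Max S}"
  define rest where "rest = rev (sorted_list_of_set (S - {Max S}))"
  have r: "rev (sorted_list_of_set S) = Max S # rest"
    using sorted_list_of_set_Max[OF assms] by (simp add: rest_def)
  have c2: "{t \<in> T. t < Max S \<and> t \<notin> {}} = c" by (simp add: c_def)
  have e: "T \<triangleleft> S = tri_aux T rest (if c = {} then {} else insert (Max c) {})"
    unfolding tri_def r by (simp only: tri_aux.simps c2 Let_def)
  show ?thesis
  proof (cases "c = {}")
    case True
    then show ?thesis using e by (simp add: c_def[symmetric] tri_def rest_def)
  next
    case False
    have "T \<triangleleft> S = {Max c} \<union> tri_aux (T - {Max c}) rest {}"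
      using e False tri_aux_split[of T rest "{Max c}"] by simp
    then show ?thesis using False by (simp add: c_def[symmetric] tri_def rest_def)
  qed
qed


definition matchable :: "nat set \<Rightarrow> nat set \<Rightarrow> bool" where
  "matchable A S \<longleftrightarrow> (\<forall>t. card (A \<inter> {t..}) \<le> card (S \<inter> {t<..}))"

definition gle :: "nat set \<Rightarrow> nat set \<Rightarrow> bool" where
  "gle A G \<longleftrightarrow> (\<forall>t. card (A \<inter> {t..}) \<le> card (G \<inter> {t..}))"

lemma matchable_below_Max:
  assumes "finite S" "matchable A S" "a \<in> A" "finite A"
  shows "\<exists>s\<in>S. a < s"
proof (rule ccontr)
  assume "\<not> ?thesis"
  then have "S \<inter> {a<..} = {}" by auto
  moreover have "card (A \<inter> {a..}) \<ge> 1"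
  proof -
    have "a \<in> A \<inter> {a..}" using assms by simp
    then have "card (A \<inter> {a..}) > 0" using assms(4) by (metis card_gt_0_iff finite_Int empty_iff)
    then show ?thesis by simp
  qed
  moreover have "card (A \<inter> {a..}) \<le> card (S \<inter> {a<..})" using assms(2) unfolding matchable_def by blast
  ultimately show False by simp
qed

lemma tri_props:
  assumes "finite S" "finite T"
  shows "T \<triangleleft> S \<subseteq> T \<and> matchable (T \<triangleleft> S) S \<and> (\<forall>A\<subseteq>T. matchable A S \<longrightarrow> gle A (T \<triangleleft> S))"
  using assms
proof (induction S arbitrary: T rule: finite_remove_induct)
  case empty
  have "A = {}" if "A \<subseteq> T" "matchable A {}" for A
    using matchable_below_Max[of "{}" A] that empty by (meson equals0I finite.emptyI finite_subset empty_iff)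
  then show ?case by (auto simp: matchable_def gle_def)
next
  case (remove S)
  define s where "s = Max S"
  define S0 where "S0 = S - {s}"
  have sS: "s \<in> S" using remove s_def by simp
  have sge: "\<forall>x\<in>S. x \<le> s" using remove s_def by simp
  have finS0: "finite S0" using remove S0_def by simp
  have cS0a: "card (S0 \<inter> {t<..}) = card (S \<inter> {t<..})" if "s \<le> t" for t
    using that by (intro arg_cong[where f=card]) (auto simp: S0_def)
  have cS0b: "Suc (card (S0 \<inter> {t<..})) = card (S \<inter> {t<..})" if "t < s" for t
  proof -
    have "S \<inter> {t<..} = insert s (S0 \<inter> {t<..})" using that sS by (auto simp: S0_def)
    then show ?thesis using finS0 by (simp add: S0_def)
  qed
  have cS0: "card (S0 \<inter> {t<..}) \<le> card (S \<inter> {t<..})" for t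
    using cS0a cS0b by (metis le_SucI le_refl not_le)
  have Aless: "\<forall>a\<in>A. a < s" if "matchable A S" "finite A" for A
    using matchable_below_Max[OF remove(1) that(1) _ that(2)] sge by (meson less_le_trans)
  have Tfin: "finite T" by fact
  define c where "c = {t \<in> T. t < s}"
  show ?case
  proof (cases "c = {}")
    case True
    have eq: "T \<triangleleft> S = T \<triangleleft> S0" using tri_rec[OF remove(1,2)] True by (simp add: c_def s_def S0_def)
    have IH: "T \<triangleleft> S0 \<subseteq> T \<and> matchable (T \<triangleleft> S0) S0" using remove.IH[OF sS Tfin] by (simp add: S0_def)
    have m: "matchable (T \<triangleleft> S) S" using IH eq cS0 unfolding matchable_def by (metis le_trans)
    have "A = {}" if "A \<subseteq> T" "matchable A S" for A
      using Aless[OF that(2) finite_subset[OF that(1) Tfin]] that(1) True by (auto simp: c_def)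
    then have "gle A (T \<triangleleft> S)" if "A \<subseteq> T" "matchable A S" for A
    proof -
      have "A = {}" using that \<open>\<And>A. A \<subseteq> T \<Longrightarrow> matchable A S \<Longrightarrow> A = {}\<close> by blast
      then show ?thesis by (simp add: gle_def)
    qed
    then show ?thesis using IH eq m by blast
  next
    case False
    define t0 where "t0 = Max c"
    have finc: "finite c" using Tfin by (simp add: c_def)
    have t0c: "t0 \<in> c" using False finc t0_def by simp
    have t0T: "t0 \<in> T" and t0s: "t0 < s" using t0c by (auto simp: c_def)
    have t0max: "\<forall>t\<in>T. t < s \<longrightarrow> t \<le> t0" using finc t0_def by (auto simp: c_def)
    define G0 where "G0 = (T - {t0}) \<triangleleft> S0"
    have ne: "{t \<in> T. t < Max S} \<noteq> {}" using False by (simp add: c_def s_def)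
    have eq: "T \<triangleleft> S = insert t0 G0" unfolding G0_def t0_def c_def S0_def s_def
      by (subst tri_rec[OF remove(1,2)]) (simp only: if_not_P[OF ne])
    have IH: "G0 \<subseteq> T - {t0} \<and> matchable G0 S0 \<and> (\<forall>A\<subseteq>T - {t0}. matchable A S0 \<longrightarrow> gle A G0)"
      using remove.IH[OF sS, of "T - {t0}"] Tfin by (simp add: S0_def G0_def)
    have finG0: "finite G0" using IH Tfin finite_subset by blast
    have t0G0: "t0 \<notin> G0" using IH by blast
    have cG1: "card ((insert t0 G0) \<inter> {t..}) = Suc (card (G0 \<inter> {t..}))" if "t \<le> t0" for t
    proof -
      have "(insert t0 G0) \<inter> {t..} = insert t0 (G0 \<inter> {t..})" using that by auto
      then show ?thesis using finG0 t0G0 by simp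
    qed
    have cG2: "(insert t0 G0) \<inter> {t..} = G0 \<inter> {t..}" if "t0 < t" for t
      using that by auto
    have m: "matchable (insert t0 G0) S"
      unfolding matchable_def
    proof
      fix t
      show "card (insert t0 G0 \<inter> {t..}) \<le> card (S \<inter> {t<..})"
      proof (cases "t \<le> t0")
        case True
        have a: "card (G0 \<inter> {t..}) \<le> card (S0 \<inter> {t<..})" using IH unfolding matchable_def by blast
        have b: "t < s" using True t0s by simp
        show ?thesis using cG1[OF True] cS0b[OF b] a by simp
      next
        case False
        have a: "card (G0 \<inter> {t..}) \<le> card (S0 \<inter> {t<..})" using IH unfolding matchable_def by blast
        show ?thesis using cG2[of t] cS0[of t] a False by simp
      qed
    qed
    have g: "gle A (insert t0 G0)" if AT: "A \<subseteq> T" and mA: "matchable A S" for A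
    proof (cases "A = {}")
      case True
      then show ?thesis by (simp add: gle_def)
    next
      case False
      have finA: "finite A" using AT Tfin finite_subset by blast
      define x where "x = Max A"
      have xA: "x \<in> A" using False finA x_def by simp
      have xmax: "\<forall>a\<in>A. a \<le> x" using finA x_def by simp
      have As: "\<forall>a\<in>A. a < s" using Aless[OF mA finA] .
      have xt0: "x \<le> t0" using t0max xA AT As by blast
      define A2 where "A2 = A - {x}"
      have finA2: "finite A2" using finA by (simp add: A2_def)
      have A2T: "A2 \<subseteq> T - {t0}"
      proof
        fix a assume "a \<in> A2"
        then have "a \<in> A" "a \<noteq> x" by (auto simp: A2_def)
        moreover have "a \<noteq> t0" using \<open>a \<in> A\<close> \<open>a \<noteq> x\<close> xmax xt0 by (metis le_antisym)
        ultimately show "a \<in> T - {t0}" using AT by auto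
      qed
      have cA1: "card (A \<inter> {t..}) = Suc (card (A2 \<inter> {t..}))" if "t \<le> x" for t
      proof -
        have "A \<inter> {t..} = insert x (A2 \<inter> {t..})" using that xA by (auto simp: A2_def)
        then show ?thesis using finA2 by (simp add: A2_def)
      qed
      have cA2: "A \<inter> {t..} = {}" if "x < t" for t using that xmax by fastforce
      have mA2: "matchable A2 S0"
        unfolding matchable_def
      proof
        fix t
        show "card (A2 \<inter> {t..}) \<le> card (S0 \<inter> {t<..})"
        proof (cases "t \<le> x")
          case True
          have "t < s" using True xA As by fastforce
          have a: "card (A \<inter> {t..}) \<le> card (S \<inter> {t<..})" using mA unfolding matchable_def by blast
          show ?thesis using cA1[OF True] cS0b[OF \<open>t < s\<close>] a by simp
        next
          case False
          then have "A2 \<inter> {t..} = {}" using cA2[of t] by (auto simp: A2_def)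
          then show ?thesis by simp
        qed
      qed
      have gA2: "gle A2 G0" using IH A2T mA2 by blast
      show ?thesis
        unfolding gle_def
      proof
        fix t
        show "card (A \<inter> {t..}) \<le> card (insert t0 G0 \<inter> {t..})"
        proof (cases "t \<le> x")
          case True
          have a: "card (A2 \<inter> {t..}) \<le> card (G0 \<inter> {t..})" using gA2 unfolding gle_def by blast
          have b: "t \<le> t0" using True xt0 by simp
          show ?thesis using cA1[OF True] cG1[OF b] a by simp
        next
          case False
          then show ?thesis using cA2[of t] by simp
        qed
      qed
    qed
    have "G0 \<subseteq> T - {t0}" using IH by (rule conjunct1)
    then have s1: "T \<triangleleft> S \<subseteq> T" using eq t0T by auto
    have s2: "matchable (T \<triangleleft> S) S" using eq m by simp
    have s3: "\<forall>A\<subseteq>T. matchable A S \<longrightarrow> gle A (T \<triangleleft> S)" using eq g by simp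
    show ?thesis using s1 s2 s3 by (intro conjI)
  qed
qed


lemma gt_eq_Suc: "{t<..} = {Suc t..}" by auto

lemma gle_refl: "gle A A" by (simp add: gle_def)

lemma gle_trans: "gle A B \<Longrightarrow> gle B C \<Longrightarrow> gle A C"
  unfolding gle_def using le_trans by blast

lemma gle_subset: "A \<subseteq> B \<Longrightarrow> finite B \<Longrightarrow> gle A B"
  unfolding gle_def by (meson Int_mono card_mono finite_Int order_refl)

lemma gle_antisym:
  assumes "finite A" "finite B" "gle A B" "gle B A"
  shows "A = B"
proof -
  have eq: "card (A \<inter> {t..}) = card (B \<inter> {t..})" for t
    using assms(3,4) unfolding gle_def by (meson le_antisym)
  have mem: "x \<in> X \<longleftrightarrow> card (X \<inter> {x..}) = Suc (card (X \<inter> {Suc x..}))" if "finite X" for X x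
  proof -
    have split: "X \<inter> {x..} = (if x \<in> X then insert x (X \<inter> {Suc x..}) else X \<inter> {Suc x..})"
      by (auto simp: Suc_le_eq order_le_less)
    show ?thesis using that by (simp add: split)
  qed
  show ?thesis
  proof (rule set_eqI)
    fix x
    show "x \<in> A \<longleftrightarrow> x \<in> B"
      using mem[OF assms(1), of x] mem[OF assms(2), of x] eq[of x] eq[of "Suc x"] by simp
  qed
qed

lemma matchable_mono2: "matchable A S \<Longrightarrow> gle S S' \<Longrightarrow> matchable A S'"
  unfolding matchable_def gle_def gt_eq_Suc using le_trans by blast

lemma matchable_mono1: "gle A' A \<Longrightarrow> matchable A S \<Longrightarrow> matchable A' S"
  unfolding matchable_def gle_def using le_trans by blast

lemma tri_eq_max:
  assumes "finite A" "finite S" "G \<subseteq> A" "matchable G S" "\<forall>A'\<subseteq>A. matchable A' S \<longrightarrow> gle A' G"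
  shows "A \<triangleleft> S = G"
proof -
  have P: "A \<triangleleft> S \<subseteq> A" "matchable (A \<triangleleft> S) S" "\<forall>A'\<subseteq>A. matchable A' S \<longrightarrow> gle A' (A \<triangleleft> S)"
    using tri_props[OF assms(2,1)] by auto
  have "gle G (A \<triangleleft> S)" using P(3) assms(3,4) by blast
  moreover have "gle (A \<triangleleft> S) G" using assms(5) P(1,2) by blast
  ultimately show ?thesis using gle_antisym assms(1,3) P(1) finite_subset by metis
qed

lemma tri_self: "finite A \<Longrightarrow> finite S \<Longrightarrow> matchable A S \<Longrightarrow> A \<triangleleft> S = A"
  by (rule tri_eq_max) (auto intro: gle_subset)

definition nest :: "(nat \<Rightarrow> nat set) \<Rightarrow> nat \<Rightarrow> nat \<Rightarrow> nat set" where
  "nest U i C = foldr (\<lambda>k acc. U k \<triangleleft> acc) [i..<C] (U C)"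

lemma nest_step: "i < C \<Longrightarrow> nest U i C = U i \<triangleleft> nest U (Suc i) C"
  by (simp add: nest_def upt_conv_Cons)

lemma nest_C: "nest U C C = U C"
  by (simp add: nest_def)

definition chain :: "(nat \<Rightarrow> nat set) \<Rightarrow> nat \<Rightarrow> nat \<Rightarrow> (nat \<Rightarrow> nat set) \<Rightarrow> bool" where
  "chain U C i B \<longleftrightarrow> (\<forall>l. i \<le> l \<and> l \<le> C \<longrightarrow> B l \<subseteq> U l) \<and>
                      (\<forall>l. i \<le> l \<and> l < C \<longrightarrow> matchable (B l) (B (Suc l)))"

lemma tri_aux_subset: "tri_aux T ss A \<subseteq> A \<union> T"
proof (induction ss arbitrary: A)
  case Nil then show ?case by simp
next
  case (Cons s ss)
  have "tri_aux T (s # ss) A = tri_aux T ss (let c = {t \<in> T. t < s \<and> t \<notin> A} in if c = {} then A else insert (Max c) A)"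
    by (simp only: tri_aux.simps(2))
  moreover have "(let c = {t \<in> T. t < s \<and> t \<notin> A} in if c = {} then A else insert (Max c) A) \<subseteq> A \<union> T"
  proof (cases "{t \<in> T. t < s \<and> t \<notin> A} = {}")
    case True then show ?thesis by (simp add: Let_def)
  next
    case False
    have "Max {t \<in> T. t < s \<and> t \<notin> A} \<in> {t \<in> T. t < s \<and> t \<notin> A}"
    proof (rule Max_in)
      show "finite {t \<in> T. t < s \<and> t \<notin> A}" by (rule finite_subset[of _ "{..<s}"]) auto
    qed (rule False)
    then show ?thesis using False by (simp add: Let_def)
  qed
  ultimately show ?case using Cons.IH by blast
qed

lemma tri_subset: "T \<triangleleft> S \<subseteq> T"
  unfolding tri_def using tri_aux_subset by blast

lemma nest_sub: "i \<le> C \<Longrightarrow> nest U i C \<subseteq> U i"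
  by (cases "i < C") (auto simp: nest_step tri_subset nest_C dest: le_antisym)

lemma nest_props:
  assumes fin: "\<And>l. finite (U l)" and "i \<le> C"
  shows "nest U i C \<subseteq> U i \<and> (i < C \<longrightarrow> matchable (nest U i C) (nest U (Suc i) C))"
proof (cases "i < C")
  case True
  have "finite (nest U (Suc i) C)" using nest_sub[of "Suc i" C U] True fin finite_subset by auto
  then show ?thesis using tri_props[OF _ fin[of i]] nest_step[OF True] True by simp
next
  case False then have "i = C" using assms(2) by simp
  then show ?thesis by (simp add: nest_C)
qed

lemma nest_finite: "(\<And>l. finite (U l)) \<Longrightarrow> i \<le> C \<Longrightarrow> finite (nest U i C)"
  by (rule finite_subset[OF nest_sub]) auto

lemma nest_chain: "(\<And>l. finite (U l)) \<Longrightarrow> chain U C i (\<lambda>l. nest U l C)"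
  unfolding chain_def
proof (intro conjI allI impI)
  fix l assume "i \<le> l \<and> l \<le> C"
  then show "nest U l C \<subseteq> U l" using nest_sub by simp
next
  fix l assume "(\<And>l. finite (U l))" "i \<le> l \<and> l < C"
  then show "matchable (nest U l C) (nest U (Suc l) C)" using nest_props[of U l C] by simp
qed

lemma chain_le_nest:
  assumes fin: "\<And>l. finite (U l)" and "chain U C i B" and "i \<le> C"
  shows "gle (B i) (nest U i C)"
  using assms(2,3)
proof (induction "C - i" arbitrary: i)
  case 0
  then have "i = C" by simp
  then show ?case using 0 fin unfolding chain_def by (simp add: nest_C gle_subset)
next
  case (Suc n)
  then have iC: "i < C" by simp
  have ch: "chain U C (Suc i) B" using Suc.prems unfolding chain_def by simp
  have IH: "gle (B (Suc i)) (nest U (Suc i) C)" using Suc.hyps(1)[of "Suc i"] Suc.hyps(2) ch iC by simp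
  have m: "matchable (B i) (nest U (Suc i) C)"
    using Suc.prems iC IH matchable_mono2 unfolding chain_def by blast
  have sub: "B i \<subseteq> U i" using Suc.prems iC unfolding chain_def by simp
  have "finite (nest U (Suc i) C)" using nest_finite[OF fin] iC by simp
  then show ?case using tri_props[OF _ fin[of i]] sub m nest_step[OF iC] by simp
qed

lemma nest_transfer:
  assumes finU: "\<And>l. finite (U l)" and finV: "\<And>l. finite (V l)" and C1: "1 \<le> C"
    and sub: "\<And>l. U l \<subseteq> V l"
    and fx: "\<And>B. chain V C 1 B \<Longrightarrow> \<exists>B'. chain U C 1 B' \<and> gle (B 1) (B' 1)"
  shows "nest U 1 C = nest V 1 C"
proof -
  have cU: "chain U C 1 (\<lambda>l. nest U l C)" by (rule nest_chain[OF finU])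
  have cV: "chain V C 1 (\<lambda>l. nest V l C)" by (rule nest_chain[OF finV])
  have cUV: "chain V C 1 (\<lambda>l. nest U l C)" using cU sub unfolding chain_def by blast
  have g1: "gle (nest U 1 C) (nest V 1 C)" using chain_le_nest[OF finV cUV C1] by simp
  obtain B' where B': "chain U C 1 B'" "gle (nest V 1 C) (B' 1)" using fx[OF cV] by auto
  have g2: "gle (nest V 1 C) (nest U 1 C)" using B' chain_le_nest[OF finU B'(1) C1] gle_trans by blast
  show ?thesis using gle_antisym g1 g2 nest_finite finU finV C1 by metis
qed



lemma card_split_at:
  assumes "finite (X::nat set)" "a \<le> b"
  shows "card (X \<inter> {a..}) = card (X \<inter> {a..<b}) + card (X \<inter> {b..})"
proof -
  have "X \<inter> {a..} = (X \<inter> {a..<b}) \<union> (X \<inter> {b..})" using assms(2) by (auto simp: not_le intro: order_trans)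
  moreover have "(X \<inter> {a..<b}) \<inter> (X \<inter> {b..}) = {}" by auto
  ultimately show ?thesis using assms(1) by (simp add: card_Un_disjoint)
qed

lemma fixI:
  assumes fin: "finite Ta1" "finite Ta" and A0: "A0 \<subseteq> Ta1" and Ba: "Ba \<subseteq> insert k Ta"
    and kB: "k \<in> Ba" and kT: "k \<notin> Ta" and m: "matchable A0 Ba"
    and alpha: "\<And>t. card (Ta1 \<inter> {t..<k}) \<le> card (Ta \<inter> {t<..<k})"
  obtains B2 where "B2 \<subseteq> Ta" "matchable A0 B2" "gle B2 Ba"
proof -
  define Z where "Z = Ta \<inter> {..<k} - Ba"
  have finZ: "finite Z" using fin by (simp add: Z_def)
  have finB: "finite Ba" using Ba fin finite_subset by blast
  have finA0: "finite A0" using A0 fin finite_subset by blast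
  define B2 where "B2 = (if Z = {} then Ba - {k} else insert (Max Z) (Ba - {k}))"
  define lo where "lo = (if Z = {} then 0 else Max Z)"
  have bZ: "Z \<noteq> {} \<Longrightarrow> Max Z \<in> Z" using finZ by simp
  have Zlo: "\<forall>z\<in>Z. z \<le> lo" using finZ by (auto simp: lo_def)
  have lok: "Z \<noteq> {} \<Longrightarrow> lo < k" using bZ by (auto simp: lo_def Z_def)
  have sub: "B2 \<subseteq> Ta" using Ba bZ by (auto simp: B2_def Z_def)
  have finB2: "finite B2" using sub fin finite_subset by blast
  have gle2: "gle B2 Ba"
    unfolding gle_def
  proof
    fix t
    show "card (B2 \<inter> {t..}) \<le> card (Ba \<inter> {t..})"
    proof (cases "Z \<noteq> {} \<and> t \<le> Max Z")
      case True
      have bk: "Max Z < k" "Max Z \<notin> Ba" "Max Z \<in> Ta" using bZ True by (auto simp: Z_def)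
      have "B2 \<inter> {t..} = insert (Max Z) ((Ba \<inter> {t..}) - {k})" using True by (auto simp: B2_def)
      moreover have kk: "k \<in> Ba \<inter> {t..}" using kB True bk by auto
      moreover have "card (Ba \<inter> {t..}) > 0" using finB kk card_gt_0_iff by blast
      ultimately show ?thesis using finB bk by (simp add: card_Diff_singleton)
    next
      case False
      then have "B2 \<inter> {t..} \<subseteq> Ba \<inter> {t..}" by (auto simp: B2_def)
      then show ?thesis using finB by (simp add: card_mono)
    qed
  qed
  have match: "matchable A0 B2"
    unfolding matchable_def
  proof
    fix t
    show "card (A0 \<inter> {t..}) \<le> card (B2 \<inter> {t<..})"
    proof (cases "k \<le> t")
      case True
      have Zk: "\<forall>z\<in>Z. z < k" by (auto simp: Z_def)
      have "B2 \<inter> {t<..} = Ba \<inter> {t<..}"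
      proof (cases "Z = {}")
        case True then show ?thesis using \<open>k \<le> t\<close> by (auto simp: B2_def)
      next
        case False
        then have "Max Z < k" using Zk bZ by blast
        then show ?thesis using \<open>k \<le> t\<close> False by (auto simp: B2_def)
      qed
      then show ?thesis using m True unfolding matchable_def by metis
    next
      case tk: False
      show ?thesis
      proof (cases "Z \<noteq> {} \<and> t < Max Z")
        case True
        have bk: "Max Z < k" "Max Z \<notin> Ba" using bZ True by (auto simp: Z_def)
        have "B2 \<inter> {t<..} = insert (Max Z) ((Ba \<inter> {t<..}) - {k})" using True by (auto simp: B2_def)
        moreover have kk: "k \<in> Ba \<inter> {t<..}" using kB tk by auto
        moreover have "card (Ba \<inter> {t<..}) > 0" using finB kk card_gt_0_iff by blast
        ultimately have "card (B2 \<inter> {t<..}) = card (Ba \<inter> {t<..})"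
          using finB bk by (simp add: card_Diff_singleton)
        then show ?thesis using m unfolding matchable_def by metis
      next
        case False
        have TB: "Ta \<inter> {t<..<k} \<subseteq> Ba" 
        proof
          fix z assume z: "z \<in> Ta \<inter> {t<..<k}"
          show "z \<in> Ba"
          proof (rule ccontr)
            assume "z \<notin> Ba"
            then have "z \<in> Z" using z by (auto simp: Z_def)
            then have "z \<le> Max Z" using finZ by simp
            moreover have "Z \<noteq> {}" using \<open>z \<in> Z\<close> by blast
            ultimately show False using False z by auto
          qed
        qed
        have "A0 \<inter> {t..} \<subseteq> (Ta1 \<inter> {t..<k}) \<union> (A0 \<inter> {k..})" using A0 by auto
        then have "card (A0 \<inter> {t..}) \<le> card ((Ta1 \<inter> {t..<k}) \<union> (A0 \<inter> {k..}))"
          using fin finA0 by (intro card_mono) auto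
        also have "\<dots> \<le> card (Ta1 \<inter> {t..<k}) + card (A0 \<inter> {k..})" by (rule card_Un_le)
        also have "\<dots> \<le> card (Ta \<inter> {t<..<k}) + card (Ba \<inter> {k<..})"
          using alpha[of t] m unfolding matchable_def by (meson add_le_mono)
        also have "card (Ta \<inter> {t<..<k}) \<le> card (B2 \<inter> {t<..<k})"
        proof -
          have "Ta \<inter> {t<..<k} \<subseteq> B2 \<inter> {t<..<k}" using TB by (auto simp: B2_def)
          then show ?thesis using finB2 by (simp add: card_mono)
        qed
        also have "card (Ba \<inter> {k<..}) \<le> card (B2 \<inter> {k<..})"
        proof -
          have "Ba \<inter> {k<..} \<subseteq> B2 \<inter> {k<..}" by (auto simp: B2_def)
          then show ?thesis using finB2 by (simp add: card_mono)
        qed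
        also have "card (B2 \<inter> {t<..<k}) + card (B2 \<inter> {k<..}) \<le> card (B2 \<inter> {t<..})"
        proof -
          have "(B2 \<inter> {t<..<k}) \<union> (B2 \<inter> {k<..}) \<subseteq> B2 \<inter> {t<..}" using tk by auto
          moreover have "(B2 \<inter> {t<..<k}) \<inter> (B2 \<inter> {k<..}) = {}" by auto
          ultimately show ?thesis using finB2
            by (metis card_Un_disjoint card_mono finite_Int)
        qed
        finally show ?thesis by simp
      qed
    qed
  qed
  show ?thesis using that sub match gle2 by blast
qed


lemma fixII:
  assumes fin: "finite Tj" "finite Tn" and Bj: "Bj \<subseteq> insert k Tj"
    and kB: "k \<in> Bj" and kT: "k \<notin> Tj" and Bn: "Bn \<subseteq> Tn" and m: "matchable Bj Bn"
    and beta: "\<And>t. card (Tn \<inter> {k<..t}) \<le> card (Tj \<inter> {k<..<t})"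
  obtains B2 where "B2 \<subseteq> Tj" "matchable B2 Bn" "gle Bj B2"
proof -
  define Z where "Z = Tj \<inter> {k<..} - Bj"
  have finZ: "finite Z" using fin by (simp add: Z_def)
  have finB: "finite Bj" using Bj fin finite_subset by blast
  have finBn: "finite Bn" using Bn fin finite_subset by blast
  have Zne: "Z \<noteq> {}"
  proof
    assume Z0: "Z = {}"
    then have TB: "Tj \<inter> {k<..} \<subseteq> Bj \<inter> {k<..}" by (auto simp: Z_def)
    define t where "t = Max (insert k Tn)"
    have "Tn \<inter> {k<..t} = Tn \<inter> {k<..}" using fin by (auto simp: t_def)
    moreover have "card (Tj \<inter> {k<..<t}) \<le> card (Tj \<inter> {k<..})" using fin by (intro card_mono) auto
    ultimately have c1: "card (Tn \<inter> {k<..}) \<le> card (Tj \<inter> {k<..})" using beta[of t] by simp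
    have c2: "card (Bn \<inter> {k<..}) \<le> card (Tn \<inter> {k<..})" using Bn fin by (intro card_mono) auto
    have "Bj \<inter> {k..} = insert k (Bj \<inter> {k<..})" using kB by auto
    then have c3: "card (Bj \<inter> {k..}) = Suc (card (Bj \<inter> {k<..}))" using finB by simp
    have c4: "card (Tj \<inter> {k<..}) \<le> card (Bj \<inter> {k<..})" using TB finB by (simp add: card_mono)
    have "card (Bj \<inter> {k..}) \<le> card (Bn \<inter> {k<..})" using m unfolding matchable_def by blast
    then show False using c1 c2 c3 c4 by simp
  qed
  define b where "b = Min Z"
  have bZ: "b \<in> Z" using finZ Zne by (simp add: b_def)
  have bk: "k < b" "b \<notin> Bj" "b \<in> Tj" using bZ by (auto simp: Z_def)
  have bmin: "\<And>z. z \<in> Tj \<Longrightarrow> k < z \<Longrightarrow> z < b \<Longrightarrow> z \<in> Bj"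
  proof (rule ccontr)
    fix z assume "z \<in> Tj" "k < z" "z < b" "z \<notin> Bj"
    then have "z \<in> Z" by (auto simp: Z_def)
    then have "b \<le> z" using finZ by (simp add: b_def)
    then show False using \<open>z < b\<close> by simp
  qed
  define B2 where "B2 = insert b (Bj - {k})"
  have sub: "B2 \<subseteq> Tj" using Bj bk by (auto simp: B2_def)
  have finB2: "finite B2" using sub fin finite_subset by blast
  have low: "card (B2 \<inter> {t..}) = card (Bj \<inter> {t..})" if "t \<le> k" for t
  proof -
    have "B2 \<inter> {t..} = insert b ((Bj \<inter> {t..}) - {k})" using that bk by (auto simp: B2_def)
    moreover have kk: "k \<in> Bj \<inter> {t..}" using kB that by auto
    moreover have "card (Bj \<inter> {t..}) > 0" using finB kk card_gt_0_iff by blast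
    ultimately show ?thesis using finB bk by (simp add: card_Diff_singleton)
  qed
  have gle2: "gle Bj B2"
    unfolding gle_def
  proof
    fix t
    show "card (Bj \<inter> {t..}) \<le> card (B2 \<inter> {t..})"
    proof (cases "t \<le> k")
      case True then show ?thesis using low by simp
    next
      case False
      then have "Bj \<inter> {t..} \<subseteq> B2 \<inter> {t..}" by (auto simp: B2_def)
      then show ?thesis using finB2 by (simp add: card_mono)
    qed
  qed
  have match: "matchable B2 Bn"
    unfolding matchable_def
  proof
    fix t
    show "card (B2 \<inter> {t..}) \<le> card (Bn \<inter> {t<..})"
    proof (cases "t \<le> k")
      case True then show ?thesis using low[OF True] m unfolding matchable_def by metis
    next
      case tk: False
      show ?thesis
      proof (cases "b < t")
        case True
        then have "B2 \<inter> {t..} = Bj \<inter> {t..}" using tk by (auto simp: B2_def)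
        then show ?thesis using m unfolding matchable_def by metis
      next
        case False
        have e1: "B2 \<inter> {t..} = insert b (Bj \<inter> {t..})" using False tk bk by (auto simp: B2_def)
        have c1: "card (B2 \<inter> {t..}) = Suc (card (Bj \<inter> {t..}))" using e1 finB bk by simp
        have TB: "Tj \<inter> {k<..<t} \<subseteq> Bj \<inter> {k<..<t}" using bmin False by auto
        have "Bj \<inter> {k..} = insert k ((Bj \<inter> {k<..<t}) \<union> (Bj \<inter> {t..}))" using kB tk by auto
        moreover have "(Bj \<inter> {k<..<t}) \<inter> (Bj \<inter> {t..}) = {}" by auto
        moreover have "k \<notin> (Bj \<inter> {k<..<t}) \<union> (Bj \<inter> {t..})" using tk by auto
        ultimately have c2: "card (Bj \<inter> {k..}) = Suc (card (Bj \<inter> {k<..<t}) + card (Bj \<inter> {t..}))"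
          using finB by (simp add: card_Un_disjoint)
        have c3: "card (Tj \<inter> {k<..<t}) \<le> card (Bj \<inter> {k<..<t})" using TB finB by (simp add: card_mono)
        have "Bn \<inter> {k<..} = (Bn \<inter> {k<..t}) \<union> (Bn \<inter> {t<..})" using tk by auto
        moreover have "(Bn \<inter> {k<..t}) \<inter> (Bn \<inter> {t<..}) = {}" by auto
        ultimately have c4: "card (Bn \<inter> {k<..}) = card (Bn \<inter> {k<..t}) + card (Bn \<inter> {t<..})"
          using finBn by (simp add: card_Un_disjoint)
        have c5: "card (Bn \<inter> {k<..t}) \<le> card (Tn \<inter> {k<..t})" using Bn fin by (intro card_mono) auto
        have c6: "card (Bj \<inter> {k..}) \<le> card (Bn \<inter> {k<..})" using m unfolding matchable_def by blast
        have "card (Bj \<inter> {k<..<t}) \<le> card (Bj \<inter> {k<..<t})" by simp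
        have c7: "card (Bj \<inter> {k<..<t}) \<le> card (Bj \<inter> {k..})" using finB by (intro card_mono) auto
        show ?thesis using c1 c2 c3 c4 c5 c6 beta[of t] by linarith
      qed
    qed
  qed
  show ?thesis using that sub match gle2 by blast
qed



lemma skew_pos: "skew S \<Longrightarrow> (r, c) \<in> S \<Longrightarrow> 1 \<le> r \<and> 1 \<le> c"
  unfolding skew_def young_def by blast

lemma skew_finite: "skew S \<Longrightarrow> finite S"
  unfolding skew_def young_def by auto

lemma skew_convex:
  assumes "skew S" "(r1, c1) \<in> S" "(r2, c2) \<in> S" "r1 \<le> r" "r \<le> r2" "c1 \<le> c" "c \<le> c2"
  shows "(r, c) \<in> S"
proof -
  obtain L M where LM: "young L" "young M" "M \<subseteq> L" "S = L - M" using assms(1) unfolding skew_def by blast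
  have p1: "1 \<le> r1" "1 \<le> c1" using skew_pos[OF assms(1,2)] by auto
  have "(r, c) \<in> L" using LM(1) assms(3-7) p1 LM(4) unfolding young_def by (meson DiffD1 order_trans)
  moreover have "(r, c) \<notin> M"
  proof
    assume "(r, c) \<in> M"
    then have "(r1, c1) \<in> M" using LM(2) assms(4,6) p1 unfolding young_def by blast
    then show False using assms(2) LM(4) by blast
  qed
  ultimately show ?thesis using LM(4) by blast
qed

definition numcol :: "(cell \<Rightarrow> dentry option) \<Rightarrow> nat \<Rightarrow> nat set" where
  "numcol D j = {v. \<exists>r. D (r, j) = Some (Num v)}"

definition val :: "(cell \<Rightarrow> dentry option) \<Rightarrow> cell \<Rightarrow> nat" where
  "val D c = (case D c of Some (Num v) \<Rightarrow> v | _ \<Rightarrow> 0)"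

lemma numcol_finite:
  assumes "finite (dom D)"
  shows "finite (numcol D j)"
proof -
  have "numcol D j \<subseteq> val D ` dom D" unfolding numcol_def val_def by (force simp: image_iff)
  then show ?thesis using assms finite_subset by blast
qed

lemma sInc_row: "sInc k D \<Longrightarrow> D (i, j) = Some a \<Longrightarrow> D (i, j') = Some b \<Longrightarrow> j < j' \<Longrightarrow> dlt k a b"
  unfolding sInc_def by blast

lemma sInc_col: "sInc k D \<Longrightarrow> D (i, j) = Some a \<Longrightarrow> D (i', j) = Some b \<Longrightarrow> i < i' \<Longrightarrow> dlt k a b"
  unfolding sInc_def by blast

lemma sInc_skew: "sInc k D \<Longrightarrow> skew (dom D)"
  unfolding sInc_def by blast

lemma kmove_None: "kmove k D c = None \<longleftrightarrow> D c = None"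
  unfolding kmove_def by (auto split: option.splits dentry.splits)

lemma kmove_dom: "dom (kmove k D) = dom D"
  unfolding dom_def by (simp add: kmove_None)

lemma kmove_Num_ne: "v \<noteq> k \<Longrightarrow> kmove k D c = Some (Num v) \<longleftrightarrow> D c = Some (Num v)"
  unfolding kmove_def by (auto split: option.splits dentry.splits)

lemma kmove_Num_k: "kmove k D c = Some (Num k) \<longleftrightarrow>
   (D c = Some (Num k) \<and> \<not> (\<exists>c'. adj c c' \<and> D c' = Some Dot)) \<or>
   (D c = Some Dot \<and> (\<exists>c'. adj c c' \<and> D c' = Some (Num k)))"
  unfolding kmove_def by (auto split: option.splits dentry.splits)

lemma kmove_Dot: "kmove k D c = Some Dot \<longleftrightarrow>
   (D c = Some Dot \<and> \<not> (\<exists>c'. adj c c' \<and> D c' = Some (Num k))) \<or>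
   (D c = Some (Num k) \<and> (\<exists>c'. adj c c' \<and> D c' = Some Dot))"
  unfolding kmove_def by (auto split: option.splits dentry.splits)

lemma adj_cases:
  assumes "adj (r, j) c'"
  obtains "c' = (r, Suc j)" | "j \<ge> 1" "c' = (r, j - 1)" | "c' = (Suc r, j)" | "r \<ge> 1" "c' = (r - 1, j)"
  using assms unfolding adj_def by (cases c') auto

lemma numcol_kmove_ne: "numcol (kmove k D) j - {k} = numcol D j - {k}"
  unfolding numcol_def using kmove_Num_ne by auto


lemma sInc_dom_finite: "sInc k D \<Longrightarrow> finite (dom D)"
  using sInc_skew skew_finite by blast

lemma col_inj:
  assumes S: "sInc k D" and "D (r1, j) = Some (Num w1)" "D (r2, j) = Some (Num w2)" "r1 \<noteq> r2"
  shows "w1 \<noteq> w2"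
proof (cases "r1 < r2")
  case True then show ?thesis using sInc_col[OF S assms(2,3)] by auto
next
  case False then have "r2 < r1" using assms(4) by simp
  then show ?thesis using sInc_col[OF S assms(3,2)] by auto
qed

lemma G_add:
  assumes S: "sInc k D" and k1: "k \<in> numcol (kmove k D) a" and k2: "k \<notin> numcol D a"
  shows "2 \<le> a \<and> k \<in> numcol D (a - 1) \<and>
         (\<forall>t. card (numcol D (a - 1) \<inter> {t..<k}) \<le> card (numcol D a \<inter> {t<..<k}))"
proof -
  obtain r where r: "kmove k D (r, a) = Some (Num k)" using k1 unfolding numcol_def by auto
  have Dra: "D (r, a) = Some Dot" and ex: "\<exists>c'. adj (r, a) c' \<and> D c' = Some (Num k)"
    using r k2 unfolding kmove_Num_k numcol_def by auto
  obtain c' where c': "adj (r, a) c'" "D c' = Some (Num k)" using ex by blast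
  have Dk: "D (r, a - 1) = Some (Num k) \<and> 2 \<le> a"
    using c'(1)
  proof (cases rule: adj_cases)
    case 1 then show ?thesis using sInc_row[OF S Dra] c'(2) by fastforce
  next
    case 2
    have "(r, a - 1) \<in> dom D" using c'(2) 2 by auto
    then have "1 \<le> a - 1" using skew_pos[OF sInc_skew[OF S]] by blast
    then show ?thesis using c'(2) 2 by auto
  next
    case 3 then show ?thesis using sInc_col[OF S Dra] c'(2) by fastforce
  next
    case 4 then show ?thesis using k2 c'(2) unfolding numcol_def by auto
  qed
  have alpha: "card (numcol D (a - 1) \<inter> {t..<k}) \<le> card (numcol D a \<inter> {t<..<k})" for t
  proof -
    define R where "R = {r'. \<exists>v. D (r', a - 1) = Some (Num v) \<and> t \<le> v \<and> v < k}"
    have finD: "finite (dom D)" using sInc_dom_finite[OF S] .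
    have "R \<subseteq> fst ` dom D" unfolding R_def by (force simp: image_iff)
    then have finR: "finite R" using finD finite_subset by blast
    have e1: "numcol D (a - 1) \<inter> {t..<k} = (\<lambda>r'. val D (r', a - 1)) ` R"
      unfolding numcol_def R_def val_def by (force simp: image_iff)
    have props: "\<exists>w. D (r', a) = Some (Num w) \<and> t < w \<and> w < k" if rR: "r' \<in> R" for r'
    proof -
      obtain v where v: "D (r', a - 1) = Some (Num v)" "t \<le> v" "v < k" using rR R_def by auto
      have rr: "r' < r"
      proof (rule ccontr)
        assume "\<not> r' < r"
        then have "r' = r \<or> r < r'" by auto
        then show False
        proof
          assume "r' = r" then show False using v Dk by auto
        next
          assume "r < r'" then show False using sInc_col[OF S _ v(1)] Dk v(3) by fastforce
        qed
      qed
      have "(r', a) \<in> dom D"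
        using skew_convex[OF sInc_skew[OF S], of r' "a - 1" r a r' a] v(1) Dra rr by auto
      then obtain x where x: "D (r', a) = Some x" by auto
      have "dlt k x Dot" using sInc_col[OF S x Dra rr] .
      then obtain w where w: "x = Num w" "w \<le> k" by (cases x) auto
      have "v < w" using sInc_row[OF S v(1), of a x] x w Dk by fastforce
      moreover have "w \<noteq> k" using k2 x w unfolding numcol_def by auto
      ultimately show ?thesis using x w v by auto
    qed
    define g where "g = (\<lambda>r'. val D (r', a))"
    have inj: "inj_on g R"
    proof (rule inj_onI)
      fix r1 r2 assume "r1 \<in> R" "r2 \<in> R" "g r1 = g r2"
      then show "r1 = r2" using props col_inj[OF S] unfolding g_def val_def by fastforce
    qed
    have gR: "g ` R \<subseteq> numcol D a \<inter> {t<..<k}"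
      using props unfolding g_def val_def numcol_def by fastforce
    have "card (numcol D (a - 1) \<inter> {t..<k}) \<le> card R" using e1 card_image_le finR by simp
    also have "\<dots> = card (g ` R)" using inj by (simp add: card_image)
    also have "\<dots> \<le> card (numcol D a \<inter> {t<..<k})"
      using gR numcol_finite[OF finD] by (intro card_mono) auto
    finally show ?thesis .
  qed
  show ?thesis using Dk alpha unfolding numcol_def by blast
qed


lemma G_lose:
  assumes S: "sInc k D" and k1: "k \<in> numcol D j" and k2: "k \<notin> numcol (kmove k D) j"
  shows "k \<in> numcol (kmove k D) (Suc j) \<and>
         (\<forall>t. card (numcol D (Suc j) \<inter> {k<..t}) \<le> card (numcol D j \<inter> {k<..<t}))"
proof -
  obtain r where Drj: "D (r, j) = Some (Num k)" using k1 unfolding numcol_def by auto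
  have ex: "\<exists>c'. adj (r, j) c' \<and> D c' = Some Dot"
    using Drj k2 kmove_Num_k[of k D "(r, j)"] unfolding numcol_def by auto
  have noDot_below: "D (Suc r, j) \<noteq> Some Dot"
  proof
    assume "D (Suc r, j) = Some Dot"
    moreover have "adj (Suc r, j) (r, j)" by (simp add: adj_def)
    ultimately have "kmove k D (Suc r, j) = Some (Num k)" using Drj kmove_Num_k by blast
    then show False using k2 unfolding numcol_def by auto
  qed
  obtain c' where c': "adj (r, j) c'" "D c' = Some Dot" using ex by blast
  have Dright: "D (r, Suc j) = Some Dot"
    using c'(1)
  proof (cases rule: adj_cases)
    case 1 then show ?thesis using c'(2) by simp
  next
    case 2 then show ?thesis using sInc_row[OF S _ Drj, of "j - 1" Dot] c'(2) by fastforce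
  next
    case 3 then show ?thesis using noDot_below c'(2) by simp
  next
    case 4 then show ?thesis using sInc_col[OF S _ Drj, of "r - 1" Dot] c'(2) by fastforce
  qed
  have kr: "kmove k D (r, Suc j) = Some (Num k)"
    using Dright Drj kmove_Num_k[of k D "(r, Suc j)"] by (auto simp: adj_def)
  have beta: "card (numcol D (Suc j) \<inter> {k<..t}) \<le> card (numcol D j \<inter> {k<..<t})" for t
  proof -
    define R where "R = {r'. \<exists>w. D (r', Suc j) = Some (Num w) \<and> k < w \<and> w \<le> t}"
    have finD: "finite (dom D)" using sInc_dom_finite[OF S] .
    have "R \<subseteq> fst ` dom D" unfolding R_def by (force simp: image_iff)
    then have finR: "finite R" using finD finite_subset by blast
    have e1: "numcol D (Suc j) \<inter> {k<..t} = (\<lambda>r'. val D (r', Suc j)) ` R"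
      unfolding numcol_def R_def val_def by (force simp: image_iff)
    have props: "\<exists>v. D (r', j) = Some (Num v) \<and> k < v \<and> v < t" if rR: "r' \<in> R" for r'
    proof -
      obtain w where w: "D (r', Suc j) = Some (Num w)" "k < w" "w \<le> t" using rR R_def by auto
      have rr: "r < r'"
      proof (rule ccontr)
        assume "\<not> r < r'"
        then have "r' = r \<or> r' < r" by auto
        then show False
        proof
          assume "r' = r" then show False using w Dright by auto
        next
          assume "r' < r" then show False using sInc_col[OF S w(1) Dright] w(2) by auto
        qed
      qed
      have "(r', j) \<in> dom D"
        using skew_convex[OF sInc_skew[OF S], of r j r' "Suc j" r' j] w(1) Drj rr by auto
      then obtain x where x: "D (r', j) = Some x" by auto
      have x1: "dlt k (Num k) x" using sInc_col[OF S Drj x rr] .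
      have "x \<noteq> Dot"
      proof
        assume xd: "x = Dot"
        show False
        proof (cases "r' = Suc r")
          case True then show False using noDot_below x xd by simp
        next
          case False
          then have "Suc r < r'" using rr by simp
          have "(Suc r, j) \<in> dom D"
            using skew_convex[OF sInc_skew[OF S], of r j r' j "Suc r" j] Drj x \<open>Suc r < r'\<close> by auto
          then obtain y where y: "D (Suc r, j) = Some y" by auto
          have "dlt k (Num k) y" using sInc_col[OF S Drj y] by simp
          moreover have "dlt k y Dot" using sInc_col[OF S y, of r' Dot] x xd \<open>Suc r < r'\<close> by simp
          ultimately show False by (cases y) auto
        qed
      qed
      then obtain v where v: "x = Num v" by (cases x) auto
      have "k < v" using x1 v by simp
      moreover have "v < w" using sInc_row[OF S, of r' j x "Suc j" "Num w"] x v w by simp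
      ultimately show ?thesis using x v w by auto
    qed
    define g where "g = (\<lambda>r'. val D (r', j))"
    have inj: "inj_on g R"
    proof (rule inj_onI)
      fix r1 r2 assume "r1 \<in> R" "r2 \<in> R" "g r1 = g r2"
      then show "r1 = r2" using props col_inj[OF S] unfolding g_def val_def by fastforce
    qed
    have gR: "g ` R \<subseteq> numcol D j \<inter> {k<..<t}"
      using props unfolding g_def val_def numcol_def by fastforce
    have "card (numcol D (Suc j) \<inter> {k<..t}) \<le> card R" using e1 card_image_le finR by simp
    also have "\<dots> = card (g ` R)" using inj by (simp add: card_image)
    also have "\<dots> \<le> card (numcol D j \<inter> {k<..<t})"
      using gR numcol_finite[OF finD] by (intro card_mono) auto
    finally show ?thesis .
  qed
  show ?thesis using kr beta unfolding numcol_def by blast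
qed


lemma kmove_nest:
  assumes S: "sInc k D" and C1: "1 \<le> C"
    and bound: "\<And>r j v. kmove k D (r, j) = Some (Num v) \<Longrightarrow> j \<le> C"
  shows "nest (numcol D) 1 C = nest (numcol (kmove k D)) 1 C"
proof -
  define D' where "D' = kmove k D"
  define T where "T = numcol D"
  define T' where "T' = numcol D'"
  define W where "W = (\<lambda>l. T l \<union> T' l)"
  have finD: "finite (dom D)" using sInc_dom_finite[OF S] .
  have finD': "finite (dom D')" using finD kmove_dom unfolding D'_def by metis
  have finT: "\<And>l. finite (T l)" unfolding T_def using numcol_finite[OF finD] .
  have finT': "\<And>l. finite (T' l)" unfolding T'_def using numcol_finite[OF finD'] .
  have finW: "\<And>l. finite (W l)" unfolding W_def using finT finT' by simp
  have ne: "T' l - {k} = T l - {k}" for l unfolding T_def T'_def D'_def by (rule numcol_kmove_ne)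
  have WT: "W l \<subseteq> insert k (T l)" for l using ne[of l] unfolding W_def by (auto simp: set_eq_iff)
  have WT': "W l \<subseteq> insert k (T' l)" for l using ne[of l] unfolding W_def by (auto simp: set_eq_iff)
  have gt0: "T' l \<inter> X = T l \<inter> X" if "k \<notin> X" for l X
  proof -
    have "\<forall>x. x \<noteq> k \<longrightarrow> (x \<in> T' l \<longleftrightarrow> x \<in> T l)" using ne[of l] by (auto simp: set_eq_iff)
    then show ?thesis using that by auto
  qed
  have gt: "T' l \<inter> {k<..t} = T l \<inter> {k<..t}" "T' l \<inter> {k<..<t} = T l \<inter> {k<..<t}" for l t
    by (rule gt0, simp)+
  have I: "nest T 1 C = nest W 1 C"
  proof (rule nest_transfer[OF finT finW C1])
    show "T l \<subseteq> W l" for l unfolding W_def by blast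
  next
    fix B assume ch: "chain W C 1 B"
    have chS: "\<And>l. 1 \<le> l \<Longrightarrow> l \<le> C \<Longrightarrow> B l \<subseteq> W l" using ch unfolding chain_def by auto
    have chM: "\<And>l. 1 \<le> l \<Longrightarrow> l < C \<Longrightarrow> matchable (B l) (B (Suc l))" using ch unfolding chain_def by auto
    define md where "md = (\<lambda>l. 1 \<le> l \<and> l \<le> C \<and> k \<in> B l \<and> k \<notin> T l)"
    have mdG: "2 \<le> l \<and> k \<in> T (l - 1) \<and> (\<forall>t. card (T (l - 1) \<inter> {t..<k}) \<le> card (T l \<inter> {t<..<k}))"
      if "md l" for l
    proof -
      have "B l \<subseteq> W l" using chS that unfolding md_def by blast
      then have "k \<in> T' l" using that unfolding md_def W_def by blast
      then show ?thesis using G_add[OF S, of l] that unfolding md_def T_def T'_def D'_def by blast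
    qed
    have exB: "\<exists>B2. B2 \<subseteq> T l \<and> matchable (B (l - 1)) B2 \<and> gle B2 (B l)" if "md l" for l
    proof -
      have G: "2 \<le> l" "k \<in> T (l - 1)" "\<And>t. card (T (l - 1) \<inter> {t..<k}) \<le> card (T l \<inter> {t<..<k})"
        using mdG[OF that] by auto
      have l: "1 \<le> l - 1" "l - 1 < C" "Suc (l - 1) = l" "l \<le> C" using G(1) that unfolding md_def by auto
      have "B (l - 1) \<subseteq> W (l - 1)" using chS l by simp
      moreover have "insert k (T (l - 1)) = T (l - 1)" using G(2) by (rule insert_absorb)
      ultimately have A0: "B (l - 1) \<subseteq> T (l - 1)" using WT[of "l - 1"] by simp
      have Ba: "B l \<subseteq> insert k (T l)" using chS[of l] l WT[of l] by simp
      have m0: "matchable (B (l - 1)) (B (Suc (l - 1)))" by (rule chM[OF l(1,2)])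
      have m: "matchable (B (l - 1)) (B l)" using m0 by (simp only: l(3))
      have kB: "k \<in> B l" and kT: "k \<notin> T l" using that unfolding md_def by auto
      show ?thesis by (rule fixI[OF finT[of "l - 1"] finT[of l] A0 Ba kB kT m G(3)]) blast
    qed
    define B' where "B' = (\<lambda>l. if md l then (SOME B2. B2 \<subseteq> T l \<and> matchable (B (l - 1)) B2 \<and> gle B2 (B l)) else B l)"
    have B'md: "B' l \<subseteq> T l \<and> matchable (B (l - 1)) (B' l) \<and> gle (B' l) (B l)" if "md l" for l
      using someI_ex[OF exB[OF that]] that unfolding B'_def by simp
    have B'n: "B' l = B l" if "\<not> md l" for l using that unfolding B'_def by simp
    have md1: "\<not> md 1" using mdG by fastforce
    have "chain T C 1 B'"
      unfolding chain_def
    proof (intro conjI allI impI)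
      fix l assume l: "1 \<le> l \<and> l \<le> C"
      show "B' l \<subseteq> T l"
      proof (cases "md l")
        case True then show ?thesis using B'md by blast
      next
        case False
        have "B l \<subseteq> W l" using chS l by simp
        then have "B l \<subseteq> insert k (T l)" using WT[of l] by simp
        then show ?thesis using False l B'n[OF False] unfolding md_def by auto
      qed
    next
      fix l assume l: "1 \<le> l \<and> l < C"
      have m: "matchable (B l) (B (Suc l))" using chM l by simp
      show "matchable (B' l) (B' (Suc l))"
      proof (cases "md (Suc l)")
        case True
        then have "k \<in> T l" using mdG[OF True] by simp
        then have "\<not> md l" unfolding md_def by blast
        then show ?thesis using B'md[OF True] B'n by simp
      next
        case False
        show ?thesis
        proof (cases "md l")
          case True then show ?thesis using B'md[OF True] B'n[OF False] m matchable_mono1 by metis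
        next
          case F2: False then show ?thesis using B'n[OF False] B'n[OF F2] m by simp
        qed
      qed
    qed
    moreover have "gle (B 1) (B' 1)" using B'n[OF md1] gle_refl by simp
    ultimately show "\<exists>B'. chain T C 1 B' \<and> gle (B 1) (B' 1)" by blast
  qed
  have II: "nest T' 1 C = nest W 1 C"
  proof (rule nest_transfer[OF finT' finW C1])
    show "T' l \<subseteq> W l" for l unfolding W_def by blast
  next
    fix B assume ch: "chain W C 1 B"
    have chS: "\<And>l. 1 \<le> l \<Longrightarrow> l \<le> C \<Longrightarrow> B l \<subseteq> W l" using ch unfolding chain_def by auto
    have chM: "\<And>l. 1 \<le> l \<Longrightarrow> l < C \<Longrightarrow> matchable (B l) (B (Suc l))" using ch unfolding chain_def by auto
    define md where "md = (\<lambda>l. 1 \<le> l \<and> l \<le> C \<and> k \<in> B l \<and> k \<notin> T' l)"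
    have mdG: "k \<in> T' (Suc l) \<and> Suc l \<le> C \<and> (\<forall>t. card (T' (Suc l) \<inter> {k<..t}) \<le> card (T' l \<inter> {k<..<t}))"
      if "md l" for l
    proof -
      have "B l \<subseteq> W l" using chS that unfolding md_def by blast
      then have "k \<in> T l" using that unfolding md_def W_def by blast
      then have G: "k \<in> T' (Suc l)" "\<And>t. card (T (Suc l) \<inter> {k<..t}) \<le> card (T l \<inter> {k<..<t})"
        using G_lose[OF S, of l] that unfolding md_def T_def T'_def D'_def by blast+
      have "Suc l \<le> C" using G(1) bound unfolding T'_def D'_def numcol_def by blast
      then show ?thesis using G gt by simp
    qed
    have exB: "\<exists>B2. B2 \<subseteq> T' l \<and> matchable B2 (B (Suc l)) \<and> gle (B l) B2" if "md l" for l
    proof -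
      have G: "k \<in> T' (Suc l)" "Suc l \<le> C" "\<And>t. card (T' (Suc l) \<inter> {k<..t}) \<le> card (T' l \<inter> {k<..<t})"
        using mdG[OF that] by auto
      have l: "1 \<le> l" "l < C" using G(2) that unfolding md_def by auto
      have Bj: "B l \<subseteq> insert k (T' l)" using chS[of l] l WT'[of l] by simp
      have "B (Suc l) \<subseteq> W (Suc l)" using chS G(2) by simp
      moreover have "insert k (T' (Suc l)) = T' (Suc l)" using G(1) by (rule insert_absorb)
      ultimately have Bn: "B (Suc l) \<subseteq> T' (Suc l)" using WT'[of "Suc l"] by simp
      have m: "matchable (B l) (B (Suc l))" using chM l by simp
      have kB: "k \<in> B l" and kT: "k \<notin> T' l" using that unfolding md_def by auto
      show ?thesis by (rule fixII[OF finT'[of l] finT'[of "Suc l"] Bj kB kT Bn m G(3)]) blast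
    qed
    define B' where "B' = (\<lambda>l. if md l then (SOME B2. B2 \<subseteq> T' l \<and> matchable B2 (B (Suc l)) \<and> gle (B l) B2) else B l)"
    have B'md: "B' l \<subseteq> T' l \<and> matchable (B' l) (B (Suc l)) \<and> gle (B l) (B' l)" if "md l" for l
      using someI_ex[OF exB[OF that]] that unfolding B'_def by simp
    have B'n: "B' l = B l" if "\<not> md l" for l using that unfolding B'_def by simp
    have "chain T' C 1 B'"
      unfolding chain_def
    proof (intro conjI allI impI)
      fix l assume l: "1 \<le> l \<and> l \<le> C"
      show "B' l \<subseteq> T' l"
      proof (cases "md l")
        case True then show ?thesis using B'md by blast
      next
        case False
        have "B l \<subseteq> W l" using chS l by simp
        then have "B l \<subseteq> insert k (T' l)" using WT'[of l] by simp
        then show ?thesis using False l B'n[OF False] unfolding md_def by auto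
      qed
    next
      fix l assume l: "1 \<le> l \<and> l < C"
      have m: "matchable (B l) (B (Suc l))" using chM l by simp
      show "matchable (B' l) (B' (Suc l))"
      proof (cases "md l")
        case True
        then have "k \<in> T' (Suc l)" using mdG[OF True] by simp
        then have "\<not> md (Suc l)" unfolding md_def by blast
        then show ?thesis using B'md[OF True] B'n by simp
      next
        case False
        show ?thesis
        proof (cases "md (Suc l)")
          case True then show ?thesis using B'md[OF True] B'n[OF False] m matchable_mono2 by metis
        next
          case F2: False then show ?thesis using B'n[OF False] B'n[OF F2] m by simp
        qed
      qed
    qed
    moreover have "gle (B 1) (B' 1)"
    proof (cases "md 1")
      case True then show ?thesis using B'md by blast
    next
      case False then show ?thesis using B'n gle_refl by simp
    qed
    ultimately show "\<exists>B'. chain T' C 1 B' \<and> gle (B 1) (B' 1)" by blast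
  qed
  show ?thesis using I II unfolding T_def T'_def D'_def by simp
qed



lemma adj_sym: "adj c c' \<Longrightarrow> adj c' c"
  unfolding adj_def by auto

lemma kmove_pair:
  assumes k1: "1 \<le> k" and a: "D c1 = Some a" and b: "D c2 = Some b" and ab: "dlt k a b"
    and crit: "a = Num k \<Longrightarrow> b = Dot \<Longrightarrow> adj c1 c2"
    and a': "kmove k D c1 = Some a'" and b': "kmove k D c2 = Some b'"
  shows "dlt (k - 1) a' b'"
proof (cases a)
  case (Num x)
  note ax = Num
  show ?thesis
  proof (cases b)
    case (Num y)
    show ?thesis
    proof (cases "x = k")
      case True
      then have "k < y" using ab ax Num by simp
      moreover have "a' = Num k \<or> a' = Dot" using a' a ax True unfolding kmove_def by (auto split: if_splits)
      moreover have "b' = Num y" using b' b Num \<open>k < y\<close> unfolding kmove_def by (auto split: if_splits)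
      ultimately show ?thesis using k1 by auto
    next
      case False
      have "a' = Num x" using a' a ax False unfolding kmove_def by (auto split: if_splits)
      moreover have "x < y" using ab ax Num by simp
      moreover have "b' = Num y \<or> (y = k \<and> b' = Dot)" using b' b Num unfolding kmove_def by (auto split: if_splits)
      ultimately show ?thesis using False by auto
    qed
  next
    case Dot
    show ?thesis
    proof (cases "x = k")
      case True
      then have "adj c1 c2" using crit ax Dot by simp
      then have "a' = Dot" using a' a ax True b Dot unfolding kmove_def by (cases c2) (auto split: if_splits)
      moreover have "b' = Num k" using b' b Dot a ax True adj_sym[OF \<open>adj c1 c2\<close>] unfolding kmove_def by (cases c1) (auto split: if_splits)
      ultimately show ?thesis using k1 by simp
    next
      case False
      have "a' = Num x" using a' a ax False unfolding kmove_def by (auto split: if_splits)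
      moreover have "x < k" using ab ax Dot False by simp
      moreover have "b' = Dot \<or> b' = Num k" using b' b Dot unfolding kmove_def by (auto split: if_splits)
      ultimately show ?thesis by auto
    qed
  qed
next
  case Dot
  note ad = Dot
  show ?thesis
  proof (cases b)
    case (Num y)
    have "k < y" using ab ad Num by simp
    moreover have "a' = Dot \<or> a' = Num k" using a' a ad unfolding kmove_def by (auto split: if_splits)
    moreover have "b' = Num y" using b' b Num \<open>k < y\<close> unfolding kmove_def by (auto split: if_splits)
    ultimately show ?thesis by auto
  next
    case Dot
    then show ?thesis using ab ad by simp
  qed
qed


lemma kmove_Some: "kmove k D c = Some x \<Longrightarrow> \<exists>y. D c = Some y"
  using kmove_None[of k D c] by auto

lemma dlt_k_Dot_contra: "dlt k (Num k) y \<Longrightarrow> dlt k y Dot \<Longrightarrow> False"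
  by (cases y) auto

lemma kmove_sInc:
  assumes S: "sInc k D" and k1: "1 \<le> k"
  shows "sInc (k - 1) (kmove k D)"
  unfolding sInc_def
proof (intro conjI allI impI)
  show "skew (dom (kmove k D))" using kmove_dom sInc_skew[OF S] by metis
next
  fix c v assume "kmove k D c = Some (Num v)"
  then show "1 \<le> v"
  proof (cases "v = k")
    case True then show ?thesis using k1 by simp
  next
    case False
    then have "D c = Some (Num v)" using \<open>kmove k D c = Some (Num v)\<close> kmove_Num_ne by metis
    then show ?thesis using S unfolding sInc_def by blast
  qed
next
  fix i j j' a' b'
  assume a': "kmove k D (i, j) = Some a'" and b': "kmove k D (i, j') = Some b'" and jj: "j < j'"
  obtain a where a: "D (i, j) = Some a" using kmove_Some[OF a'] by blast
  obtain b where b: "D (i, j') = Some b" using kmove_Some[OF b'] by blast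
  have ab: "dlt k a b" using sInc_row[OF S a b jj] .
  have crit: "adj (i, j) (i, j')" if "a = Num k" "b = Dot"
  proof -
    have "j' = Suc j"
    proof (rule ccontr)
      assume "j' \<noteq> Suc j"
      then have "Suc j < j'" using jj by simp
      have "(i, Suc j) \<in> dom D" using skew_convex[OF sInc_skew[OF S], of i j i j' i "Suc j"] a b \<open>Suc j < j'\<close> by auto
      then obtain y where y: "D (i, Suc j) = Some y" by auto
      have "dlt k (Num k) y" using sInc_row[OF S a y] that by simp
      moreover have "dlt k y Dot" using sInc_row[OF S y b] that \<open>Suc j < j'\<close> by simp
      ultimately show False by (rule dlt_k_Dot_contra)
    qed
    then show ?thesis by (simp add: adj_def)
  qed
  show "dlt (k - 1) a' b'" by (rule kmove_pair[OF k1 a b ab crit a' b'])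
next
  fix i i' j a' b'
  assume a': "kmove k D (i, j) = Some a'" and b': "kmove k D (i', j) = Some b'" and ii: "i < i'"
  obtain a where a: "D (i, j) = Some a" using kmove_Some[OF a'] by blast
  obtain b where b: "D (i', j) = Some b" using kmove_Some[OF b'] by blast
  have ab: "dlt k a b" using sInc_col[OF S a b ii] .
  have crit: "adj (i, j) (i', j)" if "a = Num k" "b = Dot"
  proof -
    have "i' = Suc i"
    proof (rule ccontr)
      assume "i' \<noteq> Suc i"
      then have "Suc i < i'" using ii by simp
      have "(Suc i, j) \<in> dom D" using skew_convex[OF sInc_skew[OF S], of i j i' j "Suc i" j] a b \<open>Suc i < i'\<close> by auto
      then obtain y where y: "D (Suc i, j) = Some y" by auto
      have "dlt k (Num k) y" using sInc_col[OF S a y] that by simp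
      moreover have "dlt k y Dot" using sInc_col[OF S y b] that \<open>Suc i < i'\<close> by simp
      ultimately show False by (rule dlt_k_Dot_contra)
    qed
    then show ?thesis by (simp add: adj_def)
  qed
  show "dlt (k - 1) a' b'" by (rule kmove_pair[OF k1 a b ab crit a' b'])
qed

lemma kmove_bound_back:
  assumes S: "sInc k D" and bd: "\<forall>r j v. kmove k D (r, j) = Some (Num v) \<longrightarrow> j \<le> C"
    and D: "D (r, j) = Some (Num v)"
  shows "j \<le> C"
proof (cases "kmove k D (r, j) = Some (Num v)")
  case True then show ?thesis using bd by blast
next
  case False
  then have vk: "v = k" using D kmove_Num_ne by metis
  then have "\<exists>c'. adj (r, j) c' \<and> D c' = Some Dot" using False D kmove_Num_k[of k D "(r, j)"] by auto
  then obtain c' where c': "adj (r, j) c'" "D c' = Some Dot" by blast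
  have "kmove k D c' = Some (Num k)" using c' D vk adj_sym[OF c'(1)] kmove_Num_k by blast
  then have "snd c' \<le> C" using bd by (cases c') auto
  moreover have "j \<le> snd c'"
    using c'(1)
  proof (cases rule: adj_cases)
    case 2 then show ?thesis using sInc_row[OF S _ D, of "j - 1" Dot] c'(2) vk by fastforce
  qed auto
  ultimately show ?thesis by simp
qed

lemma rev_moves_main:
  assumes "sInc k D" "1 \<le> C" "\<forall>r j v. rev_moves k D (r, j) = Some (Num v) \<longrightarrow> j \<le> C"
  shows "nest (numcol D) 1 C = nest (numcol (rev_moves k D)) 1 C \<and>
         (\<forall>r j v. D (r, j) = Some (Num v) \<longrightarrow> j \<le> C) \<and> sInc 0 (rev_moves k D)"
  using assms
proof (induction k arbitrary: D)
  case 0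
  then show ?case by simp
next
  case (Suc k)
  have S': "sInc k (kmove (Suc k) D)" using kmove_sInc[OF Suc.prems(1)] by simp
  have IH: "nest (numcol (kmove (Suc k) D)) 1 C = nest (numcol (rev_moves k (kmove (Suc k) D))) 1 C \<and>
         (\<forall>r j v. kmove (Suc k) D (r, j) = Some (Num v) \<longrightarrow> j \<le> C) \<and> sInc 0 (rev_moves k (kmove (Suc k) D))"
    using Suc.IH[OF S' Suc.prems(2)] Suc.prems(3) by simp
  have bd: "\<And>r j v. kmove (Suc k) D (r, j) = Some (Num v) \<Longrightarrow> j \<le> C" using IH by blast
  have e: "nest (numcol D) 1 C = nest (numcol (kmove (Suc k) D)) 1 C"
    by (rule kmove_nest[OF Suc.prems(1,2) bd])
  have bd2: "\<forall>r j v. kmove (Suc k) D (r, j) = Some (Num v) \<longrightarrow> j \<le> C" using IH by blast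
  have "\<forall>r j v. D (r, j) = Some (Num v) \<longrightarrow> j \<le> C"
  proof (intro allI impI)
    fix r j v assume "D (r, j) = Some (Num v)"
    then show "j \<le> C" by (rule kmove_bound_back[OF Suc.prems(1) bd2])
  qed
  then show ?case using IH e by simp
qed


lemma rev_moves_sInc: "sInc k D \<Longrightarrow> sInc 0 (rev_moves k D)"
proof (induction k arbitrary: D)
  case 0 then show ?case by simp
next
  case (Suc k)
  have "sInc k (kmove (Suc k) D)" using kmove_sInc[OF Suc.prems] by simp
  then show ?case using Suc.IH by simp
qed


lemma undot_add_dots: "B \<inter> dom T = {} \<Longrightarrow> undot (add_dots T B) = T"
  unfolding undot_def add_dots_def by (rule ext) (auto split: option.splits)

definition inc :: "(cell \<Rightarrow> nat option) \<Rightarrow> bool" where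
  "inc U \<longleftrightarrow> (\<forall>i j j' a b. U (i, j) = Some a \<longrightarrow> U (i, j') = Some b \<longrightarrow> j < j' \<longrightarrow> a < b) \<and>
             (\<forall>i i' j a b. U (i, j) = Some a \<longrightarrow> U (i', j) = Some b \<longrightarrow> i < i' \<longrightarrow> a < b)"

lemma undot_Some: "undot D c = Some v \<longleftrightarrow> D c = Some (Num v)"
  unfolding undot_def by (auto split: option.splits dentry.splits)

lemma col_undot: "col (undot D) j = numcol D j"
  unfolding col_def numcol_def undot_Some by simp

lemma sInc0_inc: "sInc 0 D \<Longrightarrow> inc (undot D)"
  unfolding inc_def undot_Some using sInc_row sInc_col by fastforce

lemma step_inc: "antirect_step T T' \<Longrightarrow> inc T'"
  unfolding antirect_step_def using rev_moves_sInc sInc0_inc by blast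

lemma step_main:
  assumes st: "antirect_step T T'" and C1: "1 \<le> C" and bd: "\<forall>(i, j)\<in>dom T'. j \<le> C"
  shows "nest (col T) 1 C = nest (col T') 1 C \<and> (\<forall>(i, j)\<in>dom T. j \<le> C)"
proof -
  obtain m B where mB: "B \<inter> dom T = {}" "sInc m (add_dots T B)" "T' = undot (rev_moves m (add_dots T B))"
    using st unfolding antirect_step_def by blast
  define D0 where "D0 = add_dots T B"
  have bd': "\<forall>r j v. rev_moves m D0 (r, j) = Some (Num v) \<longrightarrow> j \<le> C"
  proof (intro allI impI)
    fix r j v assume "rev_moves m D0 (r, j) = Some (Num v)"
    then have "T' (r, j) = Some v" using mB(3) undot_Some unfolding D0_def by metis
    then show "j \<le> C" using bd by blast
  qed
  have R: "nest (numcol D0) 1 C = nest (numcol (rev_moves m D0)) 1 C \<and>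
         (\<forall>r j v. D0 (r, j) = Some (Num v) \<longrightarrow> j \<le> C)"
    using rev_moves_main[OF mB(2)[folded D0_def] C1 bd'] by blast
  have c1: "numcol D0 = col T"
  proof
    fix j show "numcol D0 j = col T j" using col_undot[of D0 j] undot_add_dots[OF mB(1)] unfolding D0_def by simp
  qed
  have c2: "numcol (rev_moves m D0) = col T'"
  proof
    fix j show "numcol (rev_moves m D0) j = col T' j" using col_undot mB(3) unfolding D0_def by simp
  qed
  have "\<forall>(i, j)\<in>dom T. j \<le> C"
  proof
    fix c assume "c \<in> dom T"
    then obtain v where v: "T c = Some v" by auto
    have "c \<notin> B" using mB(1) \<open>c \<in> dom T\<close> by blast
    then have "D0 c = Some (Num v)" using v unfolding D0_def add_dots_def by simp
    then show "case c of (i, j) \<Rightarrow> j \<le> C" using R by (cases c) blast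
  qed
  then show ?thesis using R c1 c2 by simp
qed

lemma antirect_antinormal: "antirect T Q \<Longrightarrow> antinormal (dom Q)"
  by (induction rule: antirect.induct) auto

lemma antirect_main:
  assumes "antirect T Q" "1 \<le> C" "\<forall>(i, j)\<in>dom Q. j \<le> C" "inc T"
  shows "nest (col T) 1 C = nest (col Q) 1 C \<and> inc Q \<and> (\<forall>(i, j)\<in>dom T. j \<le> C)"
  using assms
proof (induction rule: antirect.induct)
  case (stop T)
  then show ?case by simp
next
  case (next_step T T'' T')
  have "inc T''" using step_inc[OF next_step.hyps(2)] .
  then have IH: "nest (col T'') 1 C = nest (col T') 1 C \<and> inc T' \<and> (\<forall>(i, j)\<in>dom T''. j \<le> C)"
    using next_step.IH next_step.prems by blast
  have "nest (col T) 1 C = nest (col T'') 1 C \<and> (\<forall>(i, j)\<in>dom T. j \<le> C)"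
    using step_main[OF next_step.hyps(2) next_step.prems(1)] IH by blast
  then show ?case using IH by simp
qed


lemma antinormal_nest:
  assumes an: "antinormal (dom Q)" and ic: "inc Q" and bd: "\<forall>(i, j)\<in>dom Q. j \<le> C"
    and iC: "(i0, C) \<in> dom Q" and C1: "1 \<le> C"
  shows "nest (col Q) 1 C = col Q 1"
proof -
  obtain a b M where abM: "young M" "M \<subseteq> rect a b" "dom Q = rect a b - M"
    using an unfolding antinormal_def by blast
  have Cb: "C \<le> b" using iC abM(3) unfolding rect_def by auto
  have finQ: "finite (dom Q)" using abM(3) unfolding rect_def by simp
  have fincol: "finite (col Q j)" for j
  proof -
    have "col Q j \<subseteq> (\<lambda>c. the (Q c)) ` dom Q" unfolding col_def by (force simp: image_iff)
    then show ?thesis using finQ finite_subset by blast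
  qed
  have right: "(r, Suc l) \<in> dom Q" if "(r, l) \<in> dom Q" "Suc l \<le> C" for r l
  proof -
    have r: "1 \<le> r" "r \<le> a" "1 \<le> l" "l \<le> b" "(r, l) \<notin> M" using that abM(3) unfolding rect_def by auto
    have "(r, Suc l) \<notin> M"
    proof
      assume "(r, Suc l) \<in> M"
      then have "(r, l) \<in> M" using abM(1) r unfolding young_def by (meson le_SucI order_refl)
      then show False using r by simp
    qed
    then show ?thesis using r that(2) Cb abM(3) unfolding rect_def by auto
  qed
  have match: "matchable (col Q l) (col Q (Suc l))" if "Suc l \<le> C" for l
    unfolding matchable_def
  proof
    fix t
    define R where "R = {r. \<exists>x. Q (r, l) = Some x \<and> t \<le> x}"
    have "R \<subseteq> fst ` dom Q" unfolding R_def by (force simp: image_iff)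
    then have finR: "finite R" using finQ finite_subset by blast
    have e1: "col Q l \<inter> {t..} = (\<lambda>r. the (Q (r, l))) ` R" unfolding col_def R_def by (force simp: image_iff)
    have props: "\<exists>y. Q (r, Suc l) = Some y \<and> t < y" if rR: "r \<in> R" for r
    proof -
      obtain x where x: "Q (r, l) = Some x" "t \<le> x" using rR R_def by auto
      obtain y where y: "Q (r, Suc l) = Some y" using right[of r l] x \<open>Suc l \<le> C\<close> by auto
      have "x < y" using ic x y unfolding inc_def by blast
      then show ?thesis using x y by auto
    qed
    define g where "g = (\<lambda>r. the (Q (r, Suc l)))"
    have inj: "inj_on g R"
    proof (rule inj_onI)
      fix r1 r2 assume r: "r1 \<in> R" "r2 \<in> R" "g r1 = g r2"
      obtain y1 where y1: "Q (r1, Suc l) = Some y1" using props r by blast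
      obtain y2 where y2: "Q (r2, Suc l) = Some y2" using props r by blast
      have "y1 = y2" using r(3) y1 y2 unfolding g_def by simp
      show "r1 = r2"
      proof (rule ccontr)
        assume "r1 \<noteq> r2"
        then have "r1 < r2 \<or> r2 < r1" by auto
        then show False using ic y1 y2 \<open>y1 = y2\<close> unfolding inc_def by (metis less_irrefl)
      qed
    qed
    have gR: "g ` R \<subseteq> col Q (Suc l) \<inter> {t<..}" using props unfolding g_def col_def by fastforce
    have "card (col Q l \<inter> {t..}) \<le> card R" using e1 card_image_le finR by simp
    also have "\<dots> = card (g ` R)" using inj by (simp add: card_image)
    also have "\<dots> \<le> card (col Q (Suc l) \<inter> {t<..})" using gR fincol by (intro card_mono) auto
    finally show "card (col Q l \<inter> {t..}) \<le> card (col Q (Suc l) \<inter> {t<..})" .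
  qed
  have all: "nest (col Q) l C = col Q l" if "l \<le> C" for l
    using that
  proof (induction "C - l" arbitrary: l)
    case 0 then have "l = C" by simp
    then show ?case by (simp add: nest_C)
  next
    case (Suc n)
    then have lC: "l < C" by simp
    have IH: "nest (col Q) (Suc l) C = col Q (Suc l)" using Suc.hyps(1)[of "Suc l"] Suc.hyps(2) lC by simp
    show ?case using nest_step[OF lC] IH tri_self[OF fincol fincol match] lC by simp
  qed
  show ?thesis using all C1 by simp
qed

theorem theorem5p9:
  fixes P Q :: "cell \<Rightarrow> nat option" and C :: nat
  assumes "inc_tab P" and "young (dom P)"
    and "\<forall>(i,j)\<in>dom P. j \<le> C" and "(1, C) \<in> dom P"
    and "antirect P Q"
    and "\<forall>(i,j)\<in>dom Q. j \<le> C" and "\<exists>i. (i, C) \<in> dom Q"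
  shows "col Q 1 = Pij P 1 C"
proof -
  have C1: "1 \<le> C" using assms(2,4) unfolding young_def by blast
  have incP: "inc P" using assms(1) unfolding inc_tab_def inc_def by blast
  have M: "nest (col P) 1 C = nest (col Q) 1 C \<and> inc Q"
    using antirect_main[OF assms(5) C1 assms(6) incP] by blast
  obtain i0 where i0: "(i0, C) \<in> dom Q" using assms(7) by blast
  have "nest (col Q) 1 C = col Q 1"
    using antinormal_nest[OF antirect_antinormal[OF assms(5)] _ assms(6) i0 C1] M by blast
  moreover have "Pij P 1 C = nest (col P) 1 C" unfolding Pij_def nest_def by simp
  ultimately show ?thesis using M by simp
qed


end
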